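(* Let $G\subseteq\mathrm{O}_n(\mathbb{R})$ be a finite group with fundamental invariants $\pi_1,\dots,\pi_m$, Hilbert map $\Pi=(\pi_1,\dots,\pi_m)$ and matrix $M_\Pi=(\langle d\pi_i,d\pi_j\rangle)_{1\le i,j\le m}$. The following are equivalent: (i) $\Pi(\mathbb{R}^n)=\{z\in V_{\mathbb{R}}(I_\Pi) \mid \phi_z(M_\Pi)\text{ is positive semi-definite}\}$. (ii) For every ring homomorphism $\phi:\mathbb{R}[\underline{X}]^G\to\mathbb{R}$: $\phi$ extends to a ring homomorphism $\tilde\phi:\mathbb{R}[\underline{X}]\to\mathbb{R}$ if and only if $\phi(\langle df,df\rangle)\ge0$ for all $f\in\mathbb{R}[\underline{X}]^G$.
   Context: $\mathbb{R}[\underline{X}]=\mathbb{R}[X_1,\dots,X_n]$ and $\mathbb{R}[\underline{X}]^G=\mathbb{R}[\pi_1,\dots,\pi_m]$. For polynomials $p,q$, $\langle dp,dq\rangle=\sum_{j=1}^n\frac{\partial p}{\partial X_j}\frac{\partial q}{\partial X_j}$; for $G$-invariant $p,q$ this is $G$-invariant, so $M_\Pi$ has entries in $\mathbb{R}[\underline{X}]^G$. $I_\Pi$ is the ideal of relations among $\pi_1,\dots,\pi_m$, $V_{\mathbb{R}}(I_\Pi)\subseteq\mathbb{R}^m$ its real zero set, and for $z\in V_{\mathbb{R}}(I_\Pi)$, $\phi_z:\mathbb{R}[\underline{X}]^G\to\mathbb{R}$ is $g(\pi_1,\dots,\pi_m)\mapsto g(z)$, applied entrywise to matrices. *)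

theory Defs
  imports "HOL-Analysis.Analysis"
begin

text \<open>With C the coordinate functions this is the ring of polynomial functions, which
  (since R is infinite) is isomorphic to the polynomial ring.\<close>
inductive_set alg_gen :: "('a \<Rightarrow> real) set \<Rightarrow> ('a \<Rightarrow> real) set"
  for C :: "('a \<Rightarrow> real) set" where
  const: "(\<lambda>x. c) \<in> alg_gen C"
| gen: "f \<in> C \<Longrightarrow> f \<in> alg_gen C"
| add: "f \<in> alg_gen C \<Longrightarrow> g \<in> alg_gen C \<Longrightarrow> (\<lambda>x. f x + g x) \<in> alg_gen C"
| mult: "f \<in> alg_gen C \<Longrightarrow> g \<in> alg_gen C \<Longrightarrow> (\<lambda>x. f x * g x) \<in> alg_gen C"

definition polys :: "(real^'n \<Rightarrow> real) set" where
  "polys = alg_gen (range (\<lambda>i x. x $ i))"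

definition finite_orth_group :: "(real^'n^'n) set \<Rightarrow> bool" where
  "finite_orth_group G \<longleftrightarrow> finite G \<and> mat 1 \<in> G
     \<and> (\<forall>A\<in>G. \<forall>B\<in>G. A ** B \<in> G) \<and> (\<forall>A\<in>G. matrix_inv A \<in> G)
     \<and> (\<forall>A\<in>G. orthogonal_matrix A)"

definition inv_polys :: "(real^'n^'n) set \<Rightarrow> (real^'n \<Rightarrow> real) set" where
  "inv_polys G = {p \<in> polys. \<forall>A\<in>G. \<forall>x. p (A *v x) = p x}"

definition pderiv_fun :: "(real^'n \<Rightarrow> real) \<Rightarrow> 'n \<Rightarrow> real^'n \<Rightarrow> real" where
  "pderiv_fun p j x = deriv (\<lambda>t. p (x + t *\<^sub>R axis j 1)) 0"

definition dpair :: "(real^'n \<Rightarrow> real) \<Rightarrow> (real^'n \<Rightarrow> real) \<Rightarrow> real^'n \<Rightarrow> real" where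
  "dpair p q x = (\<Sum>j\<in>UNIV. pderiv_fun p j x * pderiv_fun q j x)"

definition homogeneous_fun :: "(real^'n \<Rightarrow> real) \<Rightarrow> bool" where
  "homogeneous_fun p \<longleftrightarrow> (\<exists>d::nat. d > 0 \<and> (\<forall>t x. p (t *\<^sub>R x) = t ^ d * p x))"

definition fundamental_invariants ::
    "(real^'n^'n) set \<Rightarrow> ('m::finite \<Rightarrow> real^'n \<Rightarrow> real) \<Rightarrow> bool" where
  "fundamental_invariants G \<pi> \<longleftrightarrow>
     (\<forall>i. \<pi> i \<in> inv_polys G \<and> homogeneous_fun (\<pi> i))
   \<and> inv_polys G = alg_gen (range \<pi>)
   \<and> (\<forall>i. \<pi> i \<notin> alg_gen (\<pi> ` (UNIV - {i})))"

definition hilbert_map :: "('m \<Rightarrow> real^'n \<Rightarrow> real) \<Rightarrow> real^'n \<Rightarrow> real^'m" where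
  "hilbert_map \<pi> x = (\<chi> i. \<pi> i x)"

definition relation_ideal :: "('m::finite \<Rightarrow> real^'n \<Rightarrow> real) \<Rightarrow> (real^'m \<Rightarrow> real) set" where
  "relation_ideal \<pi> = {g \<in> polys. \<forall>x. g (hilbert_map \<pi> x) = 0}"

definition real_zero_set :: "('a \<Rightarrow> real) set \<Rightarrow> 'a set" where
  "real_zero_set I = {z. \<forall>g\<in>I. g z = 0}"

definition phi_z :: "('m::finite \<Rightarrow> real^'n \<Rightarrow> real) \<Rightarrow> real^'m \<Rightarrow> (real^'n \<Rightarrow> real) \<Rightarrow> real" where
  "phi_z \<pi> z f = (SOME c. \<exists>g\<in>polys. (\<forall>x. f x = g (hilbert_map \<pi> x)) \<and> c = g z)"

definition M_Pi :: "('m \<Rightarrow> real^'n \<Rightarrow> real) \<Rightarrow> (real^'n \<Rightarrow> real)^'m^'m" where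
  "M_Pi \<pi> = (\<chi> i j. dpair (\<pi> i) (\<pi> j))"

definition psd :: "real^'m^'m \<Rightarrow> bool" where
  "psd A \<longleftrightarrow> (\<forall>v. 0 \<le> v \<bullet> (A *v v))"

definition ring_hom_on :: "('a \<Rightarrow> real) set \<Rightarrow> (('a \<Rightarrow> real) \<Rightarrow> real) \<Rightarrow> bool" where
  "ring_hom_on R \<phi> \<longleftrightarrow> \<phi> (\<lambda>x. 1) = 1
     \<and> (\<forall>f\<in>R. \<forall>g\<in>R. \<phi> (\<lambda>x. f x + g x) = \<phi> f + \<phi> g)
     \<and> (\<forall>f\<in>R. \<forall>g\<in>R. \<phi> (\<lambda>x. f x * g x) = \<phi> f * \<phi> g)"

end

theory Submission
  imports Defs
begin


lemma real_hom_id: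
  fixes h :: "real \<Rightarrow> real"
  assumes add: "\<And>a b. h (a + b) = h a + h b"
    and mul: "\<And>a b. h (a * b) = h a * h b" and one: "h 1 = 1"
  shows "h c = c"
proof -
  have h0: "h 0 = 0" using add[of 0 0] by simp
  have hneg: "h (- a) = - h a" for a using add[of a "-a"] h0 by simp
  have hdiff: "h (a - b) = h a - h b" for a b using add[of a "-b"] hneg[of b] by simp
  have hnat: "h (of_nat n) = of_nat n" for n
    by (induction n) (simp_all add: h0 add one)
  have hint: "h (of_int k) = of_int k" for k
  proof (cases "k \<ge> 0")
    case True then show ?thesis using hnat[of "nat k"] by simp
  next
    case False then show ?thesis using hnat[of "nat (-k)"] hneg[of "of_nat (nat (-k))"] by simp
  qed
  have hpos: "a \<ge> 0 \<Longrightarrow> h a \<ge> 0" for a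
  proof -
    assume "a \<ge> 0"
    then have "a = sqrt a * sqrt a" by simp
    then have "h a = h (sqrt a) * h (sqrt a)" using mul by metis
    then show ?thesis by simp
  qed
  have hmono: "a \<le> b \<Longrightarrow> h a \<le> h b" for a b using hpos[of "b - a"] hdiff[of b a] by simp
  have hrat: "r \<in> \<rat> \<Longrightarrow> h r = r" for r
  proof -
    assume "r \<in> \<rat>"
    then obtain p q where q: "q > 0" and r: "r = of_int p / of_int q" by (auto elim: Rats_cases')
    have e: "r * of_int q = of_int p" using r q by simp
    have "of_int p = h (of_int p)" by (simp add: hint)
    also have "\<dots> = h (r * of_int q)" using e by simp
    also have "\<dots> = h r * of_int q" by (simp add: mul hint)
    finally have "h r * of_int q = r * of_int q" using e by linarith
    then show ?thesis using q by (metis mult_cancel_right of_int_eq_0_iff less_irrefl)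
  qed
  show ?thesis
  proof (rule ccontr)
    assume ne: "h c \<noteq> c"
    show False
    proof (cases "h c < c")
      case True
      then obtain r where "r \<in> \<rat>" "h c < r" "r < c" using Rats_dense_in_real by blast
      then show False using hmono[of r c] hrat by simp
    next
      case False
      then have "c < h c" using ne by simp
      then obtain r where "r \<in> \<rat>" "c < r" "r < h c" using Rats_dense_in_real by blast
      then show False using hmono[of c r] hrat by simp
    qed
  qed
qed

lemma hom_add:
  assumes "ring_hom_on R \<psi>" "f \<in> R" "g \<in> R"
  shows "\<psi> (\<lambda>x. f x + g x) = \<psi> f + \<psi> g"
  using assms unfolding ring_hom_on_def by blast

lemma hom_mult:
  assumes "ring_hom_on R \<psi>" "f \<in> R" "g \<in> R"
  shows "\<psi> (\<lambda>x. f x * g x) = \<psi> f * \<psi> g"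
  using assms unfolding ring_hom_on_def by blast

lemma hom_const:
  assumes "ring_hom_on (alg_gen C) \<psi>"
  shows "\<psi> (\<lambda>x. c) = c"
proof -
  let ?h = "\<lambda>c. \<psi> (\<lambda>x. c)"
  have "?h c = c"
  proof (rule real_hom_id)
    show "?h (a + b) = ?h a + ?h b" for a b
      using hom_add[OF assms alg_gen.const[of a C] alg_gen.const[of b C]] by simp
    show "?h (a * b) = ?h a * ?h b" for a b
      using hom_mult[OF assms alg_gen.const[of a C] alg_gen.const[of b C]] by simp
    show "?h 1 = 1" using assms unfolding ring_hom_on_def by simp
  qed
  then show ?thesis .
qed

lemma hom_eval:
  fixes c :: "'i::finite \<Rightarrow> 'a \<Rightarrow> real"
  assumes hom: "ring_hom_on (alg_gen (range c)) \<psi>"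
    and g: "g \<in> alg_gen (range (\<lambda>i z. z $ i))"
  shows "(\<lambda>x. g (\<chi> i. c i x)) \<in> alg_gen (range c) \<and> \<psi> (\<lambda>x. g (\<chi> i. c i x)) = g (\<chi> i. \<psi> (c i))"
  using g
proof induction
  case (const d)
  then show ?case using hom_const[OF hom] by (simp add: alg_gen.const)
next
  case (gen f)
  then obtain i where "f = (\<lambda>z. z $ i)" by auto
  then show ?case by (simp add: alg_gen.gen)
next
  case (add f g)
  then show ?case using hom unfolding ring_hom_on_def by (auto intro: alg_gen.add)
next
  case (mult f g)
  then show ?case using hom unfolding ring_hom_on_def by (auto intro: alg_gen.mult)
qed

lemma alg_gen_sum:
  assumes "finite S" "\<And>i. i \<in> S \<Longrightarrow> f i \<in> alg_gen C"
  shows "(\<lambda>x. \<Sum>i\<in>S. f i x) \<in> alg_gen C"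
  using assms
proof (induction S rule: finite_induct)
  case empty
  then show ?case by (simp add: alg_gen.const)
next
  case (insert a S)
  then show ?case by (simp add: alg_gen.add)
qed

lemma hom_sum:
  assumes hom: "ring_hom_on (alg_gen C) \<psi>" and "finite S" "\<And>i. i \<in> S \<Longrightarrow> f i \<in> alg_gen C"
  shows "\<psi> (\<lambda>x. \<Sum>i\<in>S. f i x) = (\<Sum>i\<in>S. \<psi> (f i))"
  using assms(2,3)
proof (induction S rule: finite_induct)
  case empty
  then show ?case using hom_const[OF hom] by simp
next
  case (insert a S)
  have "\<psi> (\<lambda>x. \<Sum>i\<in>insert a S. f i x) = \<psi> (\<lambda>x. f a x + (\<Sum>i\<in>S. f i x))"
    using insert by simp
  also have "\<dots> = \<psi> (f a) + \<psi> (\<lambda>x. \<Sum>i\<in>S. f i x)"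
    using hom insert alg_gen_sum[of S f C] unfolding ring_hom_on_def by auto
  finally show ?case using insert by simp
qed



definition grad :: "(real^'n \<Rightarrow> real) \<Rightarrow> real^'n \<Rightarrow> real^'n" where
  "grad p x = (\<chi> j. pderiv_fun p j x)"

lemma pderiv_from_deriv:
  assumes "(p has_derivative (\<lambda>h. v \<bullet> h)) (at x)"
  shows "pderiv_fun p j x = v $ j"
proof -
  let ?g = "\<lambda>t::real. x + t *\<^sub>R axis j (1::real)"
  have g: "(?g has_derivative (\<lambda>t. t *\<^sub>R axis j 1)) (at 0)"
    by (auto intro!: derivative_eq_intros)
  have p': "(p has_derivative (\<lambda>h. v \<bullet> h)) (at (?g 0))" using assms by simp
  have "((\<lambda>t. p (?g t)) has_derivative (\<lambda>t. v \<bullet> (t *\<^sub>R axis j 1))) (at 0)"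
    using has_derivative_compose[OF g p'] by simp
  moreover have "(\<lambda>t. v \<bullet> (t *\<^sub>R axis j (1::real))) = (\<lambda>t. v $ j * t)"
    by (auto simp: inner_axis)
  ultimately have "((\<lambda>t. p (?g t)) has_field_derivative v $ j) (at 0)"
    by (simp add: has_field_derivative_def)
  then show ?thesis unfolding pderiv_fun_def by (rule DERIV_imp_deriv)
qed

lemma grad_from_deriv:
  assumes "(p has_derivative (\<lambda>h. v \<bullet> h)) (at x)"
  shows "grad p x = v"
  using pderiv_from_deriv[OF assms] by (simp add: grad_def vec_eq_iff)

lemma poly_deriv:
  assumes "p \<in> polys"
  shows "(p has_derivative (\<lambda>h. grad p x \<bullet> h)) (at x)"
proof -
  have "p \<in> alg_gen (range (\<lambda>i x. x $ i))" using assms by (simp add: polys_def)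
  then have "\<exists>v. (p has_derivative (\<lambda>h. v \<bullet> h)) (at x)"
  proof induction
    case (const c)
    have "((\<lambda>x. c) has_derivative (\<lambda>h. 0 \<bullet> h)) (at x)" by (simp add: has_derivative_const)
    then show ?case by blast
  next
    case (gen f)
    then obtain i where f: "f = (\<lambda>x. x $ i)" by auto
    have "((\<lambda>x. x $ i) has_derivative (\<lambda>h. h $ i)) (at x)"
      by (rule bounded_linear_imp_has_derivative) (rule bounded_linear_vec_nth)
    moreover have "(\<lambda>h. h $ i) = (\<lambda>h. axis i (1::real) \<bullet> h)"
      by (auto simp: inner_commute inner_axis)
    ultimately show ?case using f by metis
  next
    case (add f g)
    then obtain v w where "(f has_derivative (\<lambda>h. v \<bullet> h)) (at x)" "(g has_derivative (\<lambda>h. w \<bullet> h)) (at x)" by blast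
    then have "((\<lambda>x. f x + g x) has_derivative (\<lambda>h. v \<bullet> h + w \<bullet> h)) (at x)"
      by (rule has_derivative_add)
    moreover have "(\<lambda>h. v \<bullet> h + w \<bullet> h) = (\<lambda>h. (v + w) \<bullet> h)" by (auto simp: inner_add_left)
    ultimately show ?case by metis
  next
    case (mult f g)
    then obtain v w where "(f has_derivative (\<lambda>h. v \<bullet> h)) (at x)" "(g has_derivative (\<lambda>h. w \<bullet> h)) (at x)" by blast
    then have "((\<lambda>x. f x * g x) has_derivative (\<lambda>h. f x * (w \<bullet> h) + (v \<bullet> h) * g x)) (at x)"
      by (rule has_derivative_mult)
    moreover have "(\<lambda>h. f x * (w \<bullet> h) + (v \<bullet> h) * g x) = (\<lambda>h. (f x *\<^sub>R w + g x *\<^sub>R v) \<bullet> h)"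
      by (auto simp: inner_add_left algebra_simps)
    ultimately show ?case by metis
  qed
  then obtain v where d: "(p has_derivative (\<lambda>h. v \<bullet> h)) (at x)" by blast
  with grad_from_deriv[OF d] show ?thesis by simp
qed

lemma grad_add:
  assumes "f \<in> polys" "g \<in> polys"
  shows "grad (\<lambda>x. f x + g x) x = grad f x + grad g x"
  apply (rule grad_from_deriv)
  using has_derivative_add[OF poly_deriv[OF assms(1)] poly_deriv[OF assms(2)], of x]
  by (simp add: inner_add_left)

lemma grad_mult:
  assumes "f \<in> polys" "g \<in> polys"
  shows "grad (\<lambda>x. f x * g x) x = f x *\<^sub>R grad g x + g x *\<^sub>R grad f x"
  apply (rule grad_from_deriv)
  using has_derivative_mult[OF poly_deriv[OF assms(1)] poly_deriv[OF assms(2)], of x]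
  by (simp add: inner_add_left algebra_simps)

lemma grad_const: "grad (\<lambda>x. c) x = 0"
  by (rule grad_from_deriv) (simp add: has_derivative_const)

lemma pderiv_poly:
  assumes "p \<in> polys"
  shows "pderiv_fun p j \<in> polys"
proof -
  have "p \<in> alg_gen (range (\<lambda>i x. x $ i))" using assms by (simp add: polys_def)
  then show ?thesis
  proof induction
    case (const c)
    have "pderiv_fun (\<lambda>x. c) j = (\<lambda>x. 0)"
      using grad_const[of c] by (auto simp: grad_def vec_eq_iff fun_eq_iff)
    then show ?case by (simp add: polys_def alg_gen.const)
  next
    case (gen f)
    then obtain i where f: "f = (\<lambda>x. x $ i)" by auto
    have "((\<lambda>x. x $ i) has_derivative (\<lambda>h. axis i (1::real) \<bullet> h)) (at x)" for x
      using bounded_linear_imp_has_derivative[OF bounded_linear_vec_nth[of i]]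
      by (simp add: inner_commute inner_axis)
    then have "pderiv_fun f j = (\<lambda>x. axis i 1 $ j)"
      using pderiv_from_deriv f by blast
    then show ?case by (simp add: polys_def alg_gen.const)
  next
    case (add f g)
    then have fg: "f \<in> polys" "g \<in> polys" by (simp_all add: polys_def)
    have "pderiv_fun (\<lambda>x. f x + g x) j = (\<lambda>x. pderiv_fun f j x + pderiv_fun g j x)"
      using grad_add[OF fg] by (auto simp: grad_def vec_eq_iff fun_eq_iff)
    then show ?case using add by (simp add: polys_def alg_gen.add)
  next
    case (mult f g)
    then have fg: "f \<in> polys" "g \<in> polys" by (simp_all add: polys_def)
    have "pderiv_fun (\<lambda>x. f x * g x) j = (\<lambda>x. f x * pderiv_fun g j x + g x * pderiv_fun f j x)"
      using grad_mult[OF fg] by (auto simp: grad_def vec_eq_iff fun_eq_iff)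
    then show ?case using mult by (simp add: polys_def alg_gen.add alg_gen.mult)
  qed
qed



lemma dpair_grad: "dpair p q x = grad p x \<bullet> grad q x"
  by (simp add: dpair_def grad_def inner_vec_def)

lemma dpair_comm: "dpair p q = dpair q p"
  by (simp add: dpair_def fun_eq_iff mult.commute)

lemma dpair_add_left:
  assumes "f \<in> polys" "h \<in> polys"
  shows "dpair (\<lambda>x. f x + h x) g = (\<lambda>x. dpair f g x + dpair h g x)"
  by (simp add: fun_eq_iff dpair_grad grad_add[OF assms] inner_add_left)

lemma dpair_mult_left:
  assumes "f \<in> polys" "h \<in> polys"
  shows "dpair (\<lambda>x. f x * h x) g = (\<lambda>x. f x * dpair h g x + h x * dpair f g x)"
  by (simp add: fun_eq_iff dpair_grad grad_mult[OF assms] inner_add_left)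

lemma dpair_const_left: "dpair (\<lambda>x. c) g = (\<lambda>x. 0)"
  by (simp add: fun_eq_iff dpair_grad grad_const)

lemma dpair_poly:
  assumes "f \<in> polys" "g \<in> polys"
  shows "dpair f g \<in> polys"
proof -
  have "(\<lambda>x. \<Sum>j\<in>UNIV. pderiv_fun f j x * pderiv_fun g j x) \<in> alg_gen (range (\<lambda>i x. x $ i))"
    apply (rule alg_gen_sum)
    using pderiv_poly[OF assms(1)] pderiv_poly[OF assms(2)]
    by (auto simp: polys_def intro: alg_gen.mult)
  then show ?thesis by (simp add: polys_def dpair_def[abs_def])
qed

lemma grad_orth:
  assumes p: "p \<in> polys" and inv: "\<And>x. p (A *v x) = p x"
  shows "grad p x = transpose A *v grad p (A *v x)"
proof -
  let ?a = "grad p (A *v x)"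
  have lin: "((\<lambda>x. A *v x) has_derivative (\<lambda>h. A *v h)) (at x)"
    by (rule bounded_linear_imp_has_derivative) simp
  have d0: "((\<lambda>x. p (A *v x)) has_derivative (\<lambda>h. ?a \<bullet> (A *v h))) (at x)"
    by (rule has_derivative_compose[OF lin poly_deriv[OF p, of "A *v x"]])
  have e: "(\<lambda>x. p (A *v x)) = p" using inv by (rule ext)
  have e2: "(\<lambda>h. ?a \<bullet> (A *v h)) = (\<lambda>h. (transpose A *v ?a) \<bullet> h)"
    by (rule ext) (simp only: transpose_matrix_vector dot_lmul_matrix)
  have "(p has_derivative (\<lambda>h. (transpose A *v ?a) \<bullet> h)) (at x)"
    using d0 unfolding e e2 .
  then show ?thesis by (rule grad_from_deriv)
qed

lemma dpair_inv:
  assumes G: "finite_orth_group G" and f: "f \<in> inv_polys G" and g: "g \<in> inv_polys G"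
  shows "dpair f g \<in> inv_polys G"
proof -
  have fp: "f \<in> polys" and gp: "g \<in> polys" using f g by (auto simp: inv_polys_def)
  have "dpair f g (A *v x) = dpair f g x" if A: "A \<in> G" for A x
  proof -
    have orth: "A ** transpose A = mat 1" using G A
      by (auto simp: finite_orth_group_def orthogonal_matrix_def)
    have fi: "f (A *v y) = f y" for y using f A by (auto simp: inv_polys_def)
    have gi: "g (A *v y) = g y" for y using g A by (auto simp: inv_polys_def)
    let ?a = "grad f (A *v x)" and ?b = "grad g (A *v x)"
    have g1: "grad f x = transpose A *v ?a" by (rule grad_orth[OF fp]) (rule fi)
    have g2: "grad g x = transpose A *v ?b" by (rule grad_orth[OF gp]) (rule gi)
    have "dpair f g x = (transpose A *v ?a) \<bullet> (transpose A *v ?b)"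
      by (simp only: dpair_grad g1 g2)
    also have "\<dots> = ?a \<bullet> (A *v (transpose A *v ?b))"
      by (simp only: transpose_matrix_vector dot_lmul_matrix)
    also have "\<dots> = ?a \<bullet> ?b"
      by (simp only: matrix_vector_mul_assoc orth matrix_vector_mul_lid)
    finally show ?thesis by (simp only: dpair_grad)
  qed
  then show ?thesis using dpair_poly[OF fp gp] by (auto simp: inv_polys_def)
qed



lemma rep:
  fixes \<pi> :: "'m::finite \<Rightarrow> real^'n \<Rightarrow> real"
  assumes "f \<in> alg_gen (range \<pi>)"
  shows "\<exists>g\<in>polys. f = (\<lambda>x. g (hilbert_map \<pi> x))"
  using assms
proof induction
  case (const c)
  have "(\<lambda>z::real^'m. c) \<in> polys" by (simp add: polys_def alg_gen.const)
  then show ?case by force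
next
  case (gen f)
  then obtain i where f: "f = \<pi> i" by auto
  have "(\<lambda>z::real^'m. z $ i) \<in> polys" by (simp add: polys_def alg_gen.gen)
  then show ?case
    by (intro bexI[where x="\<lambda>z::real^'m. z $ i"]) (simp_all add: f hilbert_map_def)
next
  case (add f g)
  then obtain a b where "a \<in> polys" "b \<in> polys" "f = (\<lambda>x. a (hilbert_map \<pi> x))" "g = (\<lambda>x. b (hilbert_map \<pi> x))"
    by blast
  moreover have "(\<lambda>z. a z + b z) \<in> polys" using calculation by (simp add: polys_def alg_gen.add)
  ultimately show ?case by force
next
  case (mult f g)
  then obtain a b where "a \<in> polys" "b \<in> polys" "f = (\<lambda>x. a (hilbert_map \<pi> x))" "g = (\<lambda>x. b (hilbert_map \<pi> x))"
    by blast
  moreover have "(\<lambda>z. a z * b z) \<in> polys" using calculation by (simp add: polys_def alg_gen.mult)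
  ultimately show ?case by force
qed

lemma phi_z_eval:
  fixes \<pi> :: "'m::finite \<Rightarrow> real^'n \<Rightarrow> real"
  assumes z: "z \<in> real_zero_set (relation_ideal \<pi>)" and g: "g \<in> polys"
    and f: "\<And>x. f x = g (hilbert_map \<pi> x)"
  shows "phi_z \<pi> z f = g z"
  unfolding phi_z_def
proof (rule someI2)
  show "\<exists>g'\<in>polys. (\<forall>x. f x = g' (hilbert_map \<pi> x)) \<and> g z = g' z" using g f by blast
next
  fix c assume "\<exists>g'\<in>polys. (\<forall>x. f x = g' (hilbert_map \<pi> x)) \<and> c = g' z"
  then obtain g' where g': "g' \<in> polys" "\<forall>x. f x = g' (hilbert_map \<pi> x)" "c = g' z" by blast
  have "(\<lambda>y. g' y + (\<lambda>_. -1) y * g y) \<in> polys"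
    using g g' unfolding polys_def by (intro alg_gen.add alg_gen.mult alg_gen.const) auto
  moreover have "\<forall>x. g' (hilbert_map \<pi> x) + - 1 * g (hilbert_map \<pi> x) = 0" using g' f by simp
  ultimately have "(\<lambda>y. g' y + (\<lambda>_. -1) y * g y) \<in> relation_ideal \<pi>"
    by (simp add: relation_ideal_def)
  then have "g' z + - 1 * g z = 0" using z by (force simp: real_zero_set_def)
  then show "c = g z" using g' by simp
qed

lemma hom_pi_eval:
  fixes \<pi> :: "'m::finite \<Rightarrow> real^'n \<Rightarrow> real"
  assumes hom: "ring_hom_on (alg_gen (range \<pi>)) \<phi>" and g: "g \<in> polys"
  shows "(\<lambda>x. g (hilbert_map \<pi> x)) \<in> alg_gen (range \<pi>)"
    and "\<phi> (\<lambda>x. g (hilbert_map \<pi> x)) = g (\<chi> i. \<phi> (\<pi> i))"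
  using hom_eval[OF hom, of g] g by (simp_all add: polys_def hilbert_map_def)

lemma hom_zero_set:
  fixes \<pi> :: "'m::finite \<Rightarrow> real^'n \<Rightarrow> real"
  assumes hom: "ring_hom_on (alg_gen (range \<pi>)) \<phi>"
  shows "(\<chi> i. \<phi> (\<pi> i)) \<in> real_zero_set (relation_ideal \<pi>)"
  unfolding real_zero_set_def
proof safe
  fix g assume g: "g \<in> relation_ideal \<pi>"
  then have gp: "g \<in> polys" and g0: "\<forall>x. g (hilbert_map \<pi> x) = 0" by (auto simp: relation_ideal_def)
  have "(\<lambda>x. g (hilbert_map \<pi> x)) = (\<lambda>x. 0)" using g0 by auto
  then have "\<phi> (\<lambda>x. g (hilbert_map \<pi> x)) = 0" using hom_const[OF hom] by simp
  then show "g (\<chi> i. \<phi> (\<pi> i)) = 0" using hom_pi_eval(2)[OF hom gp] by simp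
qed

lemma hom_phi_z:
  fixes \<pi> :: "'m::finite \<Rightarrow> real^'n \<Rightarrow> real"
  assumes hom: "ring_hom_on (alg_gen (range \<pi>)) \<phi>" and f: "f \<in> alg_gen (range \<pi>)"
  shows "\<phi> f = phi_z \<pi> (\<chi> i. \<phi> (\<pi> i)) f"
proof -
  obtain g where g: "g \<in> polys" "f = (\<lambda>x. g (hilbert_map \<pi> x))" using rep[OF f] by blast
  have "phi_z \<pi> (\<chi> i. \<phi> (\<pi> i)) f = g (\<chi> i. \<phi> (\<pi> i))"
    by (rule phi_z_eval[OF hom_zero_set[OF hom] g(1)]) (simp add: g(2))
  then show ?thesis using hom_pi_eval(2)[OF hom g(1)] g(2) by simp
qed

lemma phi_z_hom:
  fixes \<pi> :: "'m::finite \<Rightarrow> real^'n \<Rightarrow> real"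
  assumes z: "z \<in> real_zero_set (relation_ideal \<pi>)"
  shows "ring_hom_on (alg_gen (range \<pi>)) (phi_z \<pi> z)" and "\<And>i. phi_z \<pi> z (\<pi> i) = z $ i"
proof -
  show "phi_z \<pi> z (\<pi> i) = z $ i" for i
    by (rule phi_z_eval[OF z, of "\<lambda>z. z $ i"]) (simp_all add: polys_def alg_gen.gen hilbert_map_def)
  show "ring_hom_on (alg_gen (range \<pi>)) (phi_z \<pi> z)"
    unfolding ring_hom_on_def
  proof safe
    show "phi_z \<pi> z (\<lambda>x. 1) = 1"
      by (rule phi_z_eval[OF z, of "\<lambda>z. 1"]) (simp_all add: polys_def alg_gen.const)
  next
    fix f g assume f: "f \<in> alg_gen (range \<pi>)" and g: "g \<in> alg_gen (range \<pi>)"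
    obtain a where a: "a \<in> polys" "f = (\<lambda>x. a (hilbert_map \<pi> x))" using rep[OF f] by blast
    obtain b where b: "b \<in> polys" "g = (\<lambda>x. b (hilbert_map \<pi> x))" using rep[OF g] by blast
    have fa: "phi_z \<pi> z f = a z" by (rule phi_z_eval[OF z a(1)]) (simp add: a(2))
    have gb: "phi_z \<pi> z g = b z" by (rule phi_z_eval[OF z b(1)]) (simp add: b(2))
    have "phi_z \<pi> z (\<lambda>x. f x + g x) = a z + b z"
      by (rule phi_z_eval[OF z, of "\<lambda>y. a y + b y"])
        (use a b in \<open>simp_all add: polys_def alg_gen.add\<close>)
    then show "phi_z \<pi> z (\<lambda>x. f x + g x) = phi_z \<pi> z f + phi_z \<pi> z g" using fa gb by simp
    have "phi_z \<pi> z (\<lambda>x. f x * g x) = a z * b z"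
      by (rule phi_z_eval[OF z, of "\<lambda>y. a y * b y"])
        (use a b in \<open>simp_all add: polys_def alg_gen.mult\<close>)
    then show "phi_z \<pi> z (\<lambda>x. f x * g x) = phi_z \<pi> z f * phi_z \<pi> z g" using fa gb by simp
  qed
qed

lemma hom_extend:
  fixes \<pi> :: "'m::finite \<Rightarrow> real^'n \<Rightarrow> real"
  assumes hom: "ring_hom_on (alg_gen (range \<pi>)) \<phi>" and sub: "alg_gen (range \<pi>) \<subseteq> polys"
  shows "(\<exists>\<psi>. ring_hom_on polys \<psi> \<and> (\<forall>f\<in>alg_gen (range \<pi>). \<psi> f = \<phi> f))
     \<longleftrightarrow> (\<chi> i. \<phi> (\<pi> i)) \<in> range (hilbert_map \<pi>)"
proof
  assume "\<exists>\<psi>. ring_hom_on polys \<psi> \<and> (\<forall>f\<in>alg_gen (range \<pi>). \<psi> f = \<phi> f)"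
  then obtain \<psi> where psi: "ring_hom_on polys \<psi>" "\<forall>f\<in>alg_gen (range \<pi>). \<psi> f = \<phi> f" by blast
  let ?x = "\<chi> j. \<psi> (\<lambda>x. x $ j)"
  have ev: "\<psi> p = p ?x" if "p \<in> polys" for p
    using hom_eval[of "\<lambda>j x. x $ j" \<psi> p] psi(1) that by (simp add: polys_def)
  have "(\<chi> i. \<phi> (\<pi> i)) = hilbert_map \<pi> ?x"
  proof -
    have "\<phi> (\<pi> i) = \<pi> i ?x" for i
    proof -
      have pi: "\<pi> i \<in> alg_gen (range \<pi>)" by (simp add: alg_gen.gen)
      then show ?thesis using psi(2) ev[of "\<pi> i"] sub by auto
    qed
    then show ?thesis by (simp add: hilbert_map_def)
  qed
  then show "(\<chi> i. \<phi> (\<pi> i)) \<in> range (hilbert_map \<pi>)" by blast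
next
  assume "(\<chi> i. \<phi> (\<pi> i)) \<in> range (hilbert_map \<pi>)"
  then obtain x where x: "(\<chi> i. \<phi> (\<pi> i)) = hilbert_map \<pi> x" by blast
  have "ring_hom_on polys (\<lambda>p. p x)" by (simp add: ring_hom_on_def)
  moreover have "\<forall>f\<in>alg_gen (range \<pi>). f x = \<phi> f"
  proof
    fix f assume f: "f \<in> alg_gen (range \<pi>)"
    obtain g where g: "g \<in> polys" "f = (\<lambda>x. g (hilbert_map \<pi> x))" using rep[OF f] by blast
    show "f x = \<phi> f" using hom_pi_eval(2)[OF hom g(1)] g(2) x by simp
  qed
  ultimately show "\<exists>\<psi>. ring_hom_on polys \<psi> \<and> (\<forall>f\<in>alg_gen (range \<pi>). \<psi> f = \<phi> f)" by blast
qed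



lemma delta_sum:
  fixes X :: "'m::finite \<Rightarrow> real"
  shows "(\<Sum>k\<in>UNIV. (if k = i then 1 else 0) * X k) = X i"
proof -
  have "(\<Sum>k\<in>UNIV. (if k = i then 1 else 0) * X k) = (\<Sum>k\<in>UNIV. if k = i then X k else 0)"
    by (rule sum.cong) auto
  also have "\<dots> = X i" by (simp add: sum.delta)
  finally show ?thesis .
qed

lemma sum_lin2:
  fixes a b :: real and B w1 w2 :: "'i \<Rightarrow> real"
  shows "(\<Sum>i\<in>S. (a * w2 i + b * w1 i) * B i) = a * (\<Sum>i\<in>S. w2 i * B i) + b * (\<Sum>i\<in>S. w1 i * B i)"
  by (simp add: sum_distrib_left sum.distrib distrib_right mult.assoc)

lemma sum_lin1:
  fixes B w1 w2 :: "'i \<Rightarrow> real"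
  shows "(\<Sum>i\<in>S. (w1 i + w2 i) * B i) = (\<Sum>i\<in>S. w1 i * B i) + (\<Sum>i\<in>S. w2 i * B i)"
  by (simp add: sum.distrib distrib_right)

lemma W_lemma:
  fixes \<pi> :: "'m::finite \<Rightarrow> real^'n \<Rightarrow> real"
  assumes hom: "ring_hom_on (alg_gen (range \<pi>)) \<phi>"
    and sub: "alg_gen (range \<pi>) \<subseteq> polys"
    and dp: "\<And>f g. f \<in> alg_gen (range \<pi>) \<Longrightarrow> g \<in> alg_gen (range \<pi>) \<Longrightarrow> dpair f g \<in> alg_gen (range \<pi>)"
    and f: "f \<in> alg_gen (range \<pi>)"
  shows "\<exists>w. \<forall>g\<in>alg_gen (range \<pi>). \<phi> (dpair f g) = (\<Sum>i\<in>UNIV. w i * \<phi> (dpair (\<pi> i) g))"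
  using f
proof induction
  case (const c)
  have "\<phi> (dpair (\<lambda>x. c) g) = 0" for g using hom_const[OF hom] by (simp add: dpair_const_left)
  then show ?case by (intro exI[where x="\<lambda>i. 0"]) simp
next
  case (gen f)
  then obtain i where f: "f = \<pi> i" by auto
  show ?case
    by (intro exI[where x="\<lambda>k. if k = i then 1 else 0"]) (simp add: f delta_sum)
next
  case (add f h)
  then obtain w1 w2 where w1: "\<forall>g\<in>alg_gen (range \<pi>). \<phi> (dpair f g) = (\<Sum>i\<in>UNIV. w1 i * \<phi> (dpair (\<pi> i) g))"
    and w2: "\<forall>g\<in>alg_gen (range \<pi>). \<phi> (dpair h g) = (\<Sum>i\<in>UNIV. w2 i * \<phi> (dpair (\<pi> i) g))" by blast
  have "\<phi> (dpair (\<lambda>x. f x + h x) g) = (\<Sum>i\<in>UNIV. (w1 i + w2 i) * \<phi> (dpair (\<pi> i) g))"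
    if g: "g \<in> alg_gen (range \<pi>)" for g
  proof -
    have "dpair (\<lambda>x. f x + h x) g = (\<lambda>x. dpair f g x + dpair h g x)"
      using add.hyps sub by (intro dpair_add_left) auto
    then have "\<phi> (dpair (\<lambda>x. f x + h x) g) = \<phi> (dpair f g) + \<phi> (dpair h g)"
      using hom_add[OF hom dp[OF add.hyps(1) g] dp[OF add.hyps(2) g]] by (simp only:)
    also have "\<dots> = (\<Sum>i\<in>UNIV. (w1 i + w2 i) * \<phi> (dpair (\<pi> i) g))"
      by (simp only: sum_lin1 bspec[OF w1 g] bspec[OF w2 g])
    finally show ?thesis .
  qed
  then show ?case by (intro exI[where x="\<lambda>i. w1 i + w2 i"]) blast
next
  case (mult f h)
  then obtain w1 w2 where w1: "\<forall>g\<in>alg_gen (range \<pi>). \<phi> (dpair f g) = (\<Sum>i\<in>UNIV. w1 i * \<phi> (dpair (\<pi> i) g))"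
    and w2: "\<forall>g\<in>alg_gen (range \<pi>). \<phi> (dpair h g) = (\<Sum>i\<in>UNIV. w2 i * \<phi> (dpair (\<pi> i) g))" by blast
  have "\<phi> (dpair (\<lambda>x. f x * h x) g) = (\<Sum>i\<in>UNIV. (\<phi> f * w2 i + \<phi> h * w1 i) * \<phi> (dpair (\<pi> i) g))"
    if g: "g \<in> alg_gen (range \<pi>)" for g
  proof -
    have "dpair (\<lambda>x. f x * h x) g = (\<lambda>x. f x * dpair h g x + h x * dpair f g x)"
      using mult.hyps sub by (intro dpair_mult_left) auto
    then have "\<phi> (dpair (\<lambda>x. f x * h x) g) = \<phi> (\<lambda>x. f x * dpair h g x) + \<phi> (\<lambda>x. h x * dpair f g x)"
      using hom_add[OF hom alg_gen.mult[OF mult.hyps(1) dp[OF mult.hyps(2) g]] alg_gen.mult[OF mult.hyps(2) dp[OF mult.hyps(1) g]]]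
      by (simp only:)
    also have "\<dots> = \<phi> f * \<phi> (dpair h g) + \<phi> h * \<phi> (dpair f g)"
      using hom_mult[OF hom mult.hyps(1) dp[OF mult.hyps(2) g]] hom_mult[OF hom mult.hyps(2) dp[OF mult.hyps(1) g]] by (simp only:)
    also have "\<dots> = (\<Sum>i\<in>UNIV. (\<phi> f * w2 i + \<phi> h * w1 i) * \<phi> (dpair (\<pi> i) g))"
      by (simp only: sum_lin2 bspec[OF w1 g] bspec[OF w2 g])
    finally show ?thesis .
  qed
  then show ?case by (intro exI[where x="\<lambda>i. \<phi> f * w2 i + \<phi> h * w1 i"]) blast
qed

lemma Q_lemma:
  fixes \<pi> :: "'m::finite \<Rightarrow> real^'n \<Rightarrow> real" and \<phi> :: "(real^'n \<Rightarrow> real) \<Rightarrow> real" and w :: "'m \<Rightarrow> real"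
  assumes w: "\<forall>g\<in>alg_gen (range \<pi>). \<phi> (dpair f g) = (\<Sum>i\<in>UNIV. w i * \<phi> (dpair (\<pi> i) g))"
    and f: "f \<in> alg_gen (range \<pi>)"
  shows "\<phi> (dpair f f) = (\<Sum>i\<in>UNIV. w i * (\<Sum>j\<in>UNIV. \<phi> (dpair (\<pi> i) (\<pi> j)) * w j))"
proof -
  have pi: "\<pi> i \<in> alg_gen (range \<pi>)" for i by (simp add: alg_gen.gen)
  have "\<phi> (dpair f f) = (\<Sum>i\<in>UNIV. w i * \<phi> (dpair (\<pi> i) f))" using w f by blast
  also have "\<dots> = (\<Sum>i\<in>UNIV. w i * \<phi> (dpair f (\<pi> i)))" by (simp only: dpair_comm[of f])
  also have "\<dots> = (\<Sum>i\<in>UNIV. w i * (\<Sum>j\<in>UNIV. w j * \<phi> (dpair (\<pi> j) (\<pi> i))))"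
    by (rule sum.cong[OF refl]) (simp only: bspec[OF w pi])
  also have "\<dots> = (\<Sum>i\<in>UNIV. w i * (\<Sum>j\<in>UNIV. \<phi> (dpair (\<pi> i) (\<pi> j)) * w j))"
  proof (rule sum.cong[OF refl])
    fix i
    have "(\<Sum>j\<in>UNIV. w j * \<phi> (dpair (\<pi> j) (\<pi> i))) = (\<Sum>j\<in>UNIV. \<phi> (dpair (\<pi> i) (\<pi> j)) * w j)"
      by (rule sum.cong[OF refl]) (simp add: dpair_comm[of "\<pi> _" "\<pi> i"] mult.commute)
    then show "w i * (\<Sum>j\<in>UNIV. w j * \<phi> (dpair (\<pi> j) (\<pi> i))) = w i * (\<Sum>j\<in>UNIV. \<phi> (dpair (\<pi> i) (\<pi> j)) * w j)"
      by simp
  qed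
  finally show ?thesis .
qed

lemma dpair_sum_left:
  fixes a :: "'i \<Rightarrow> real^'n \<Rightarrow> real"
  assumes "finite S" "\<And>i. i \<in> S \<Longrightarrow> a i \<in> polys"
  shows "dpair (\<lambda>x. \<Sum>i\<in>S. c i * a i x) g = (\<lambda>x. \<Sum>i\<in>S. c i * dpair (a i) g x)"
  using assms
proof (induction S rule: finite_induct)
  case empty
  then show ?case using dpair_const_left[of 0 g] by simp
next
  case (insert k S)
  have aS: "a i \<in> alg_gen (range (\<lambda>i x. x $ i))" if "i \<in> insert k S" for i
    using insert.prems that by (simp add: polys_def)
  have ck: "(\<lambda>x. c k * a k x) \<in> polys"
    unfolding polys_def by (rule alg_gen.mult[OF alg_gen.const aS]) simp
  have cs: "(\<lambda>x. \<Sum>i\<in>S. c i * a i x) \<in> polys"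
    unfolding polys_def by (rule alg_gen_sum) (simp_all add: insert.hyps alg_gen.mult[OF alg_gen.const aS])
  have cc: "(\<lambda>x::real^'n. c k) \<in> polys" by (simp add: polys_def alg_gen.const)
  have ak: "a k \<in> polys" using insert.prems by simp
  have IH: "dpair (\<lambda>x. \<Sum>i\<in>S. c i * a i x) g = (\<lambda>x. \<Sum>i\<in>S. c i * dpair (a i) g x)"
    using insert.IH insert.prems by simp
  have e1: "(\<lambda>x. \<Sum>i\<in>insert k S. c i * a i x) = (\<lambda>x. c k * a k x + (\<Sum>i\<in>S. c i * a i x))"
    using insert.hyps by simp
  have e2: "dpair (\<lambda>x. c k * a k x) g = (\<lambda>x. c k * dpair (a k) g x)"
    using dpair_mult_left[OF cc ak, of g] dpair_const_left[of "c k" g] by simp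
  have "dpair (\<lambda>x. \<Sum>i\<in>insert k S. c i * a i x) g
      = (\<lambda>x. dpair (\<lambda>x. c k * a k x) g x + dpair (\<lambda>x. \<Sum>i\<in>S. c i * a i x) g x)"
    unfolding e1 by (rule dpair_add_left[OF ck cs])
  also have "\<dots> = (\<lambda>x. c k * dpair (a k) g x + (\<Sum>i\<in>S. c i * dpair (a i) g x))"
    unfolding e2 IH ..
  finally show ?case using insert.hyps by simp
qed

lemma nonneg_psd:
  fixes \<pi> :: "'m::finite \<Rightarrow> real^'n \<Rightarrow> real"
  assumes hom: "ring_hom_on (alg_gen (range \<pi>)) \<phi>"
    and sub: "alg_gen (range \<pi>) \<subseteq> polys"
    and dp: "\<And>f g. f \<in> alg_gen (range \<pi>) \<Longrightarrow> g \<in> alg_gen (range \<pi>) \<Longrightarrow> dpair f g \<in> alg_gen (range \<pi>)"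
  shows "(\<forall>f\<in>alg_gen (range \<pi>). \<phi> (dpair f f) \<ge> 0)
     \<longleftrightarrow> psd (\<chi> i j. \<phi> (dpair (\<pi> i) (\<pi> j)))"
proof -
  have pi: "\<pi> i \<in> alg_gen (range \<pi>)" for i by (simp add: alg_gen.gen)
  have psd_eq: "psd (\<chi> i j. \<phi> (dpair (\<pi> i) (\<pi> j))) \<longleftrightarrow>
      (\<forall>v. 0 \<le> (\<Sum>i\<in>UNIV. v $ i * (\<Sum>j\<in>UNIV. \<phi> (dpair (\<pi> i) (\<pi> j)) * v $ j)))"
    by (simp add: psd_def inner_vec_def matrix_vector_mult_def)
  show ?thesis
  proof
    assume nn: "\<forall>f\<in>alg_gen (range \<pi>). \<phi> (dpair f f) \<ge> 0"
    have "0 \<le> (\<Sum>i\<in>UNIV. v $ i * (\<Sum>j\<in>UNIV. \<phi> (dpair (\<pi> i) (\<pi> j)) * v $ j))" for v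
    proof -
      let ?f = "\<lambda>x. \<Sum>i\<in>UNIV. v $ i * \<pi> i x"
      have f: "?f \<in> alg_gen (range \<pi>)"
        by (rule alg_gen_sum) (simp_all add: alg_gen.mult[OF alg_gen.const pi])
      have "\<forall>g\<in>alg_gen (range \<pi>). \<phi> (dpair ?f g) = (\<Sum>i\<in>UNIV. v $ i * \<phi> (dpair (\<pi> i) g))"
      proof
        fix g assume g: "g \<in> alg_gen (range \<pi>)"
        have "dpair ?f g = (\<lambda>x. \<Sum>i\<in>UNIV. v $ i * dpair (\<pi> i) g x)"
          using sub pi by (intro dpair_sum_left) auto
        moreover have "\<phi> (\<lambda>x. \<Sum>i\<in>UNIV. v $ i * dpair (\<pi> i) g x) = (\<Sum>i\<in>UNIV. \<phi> (\<lambda>x. v $ i * dpair (\<pi> i) g x))"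
          by (rule hom_sum[OF hom]) (simp_all add: alg_gen.mult[OF alg_gen.const dp[OF pi g]])
        moreover have "\<phi> (\<lambda>x. v $ i * dpair (\<pi> i) g x) = v $ i * \<phi> (dpair (\<pi> i) g)" for i
          using hom_mult[OF hom alg_gen.const dp[OF pi g], of "v $ i"] hom_const[OF hom] by simp
        ultimately show "\<phi> (dpair ?f g) = (\<Sum>i\<in>UNIV. v $ i * \<phi> (dpair (\<pi> i) g))" by simp
      qed
      from Q_lemma[OF this f] have "\<phi> (dpair ?f ?f) = (\<Sum>i\<in>UNIV. v $ i * (\<Sum>j\<in>UNIV. \<phi> (dpair (\<pi> i) (\<pi> j)) * v $ j))" .
      moreover have "0 \<le> \<phi> (dpair ?f ?f)" using nn f by blast
      ultimately show ?thesis by linarith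
    qed
    then show "psd (\<chi> i j. \<phi> (dpair (\<pi> i) (\<pi> j)))" using psd_eq by blast
  next
    assume "psd (\<chi> i j. \<phi> (dpair (\<pi> i) (\<pi> j)))"
    then have ps: "0 \<le> (\<Sum>i\<in>UNIV. v $ i * (\<Sum>j\<in>UNIV. \<phi> (dpair (\<pi> i) (\<pi> j)) * v $ j))" for v
      using psd_eq by blast
    show "\<forall>f\<in>alg_gen (range \<pi>). \<phi> (dpair f f) \<ge> 0"
    proof
      fix f assume f: "f \<in> alg_gen (range \<pi>)"
      obtain w where w: "\<forall>g\<in>alg_gen (range \<pi>). \<phi> (dpair f g) = (\<Sum>i\<in>UNIV. w i * \<phi> (dpair (\<pi> i) g))"
        using W_lemma[OF hom sub dp f] by blast
      have "(\<Sum>i\<in>UNIV. (\<chi> i. w i) $ i * (\<Sum>j\<in>UNIV. \<phi> (dpair (\<pi> i) (\<pi> j)) * (\<chi> i. w i) $ j))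
          = (\<Sum>i\<in>UNIV. w i * (\<Sum>j\<in>UNIV. \<phi> (dpair (\<pi> i) (\<pi> j)) * w j))" by simp
      then show "\<phi> (dpair f f) \<ge> 0" using Q_lemma[OF w f] ps[of "\<chi> i. w i"] by linarith
    qed
  qed
qed



theorem proposition2p7:
  fixes G :: "(real^'n^'n) set" and \<pi> :: "'m::finite \<Rightarrow> real^'n \<Rightarrow> real"
  assumes "finite_orth_group G"
    and "fundamental_invariants G \<pi>"
  shows "hilbert_map \<pi> ` UNIV =
           {z \<in> real_zero_set (relation_ideal \<pi>).
              psd (\<chi> i j. phi_z \<pi> z (M_Pi \<pi> $ i $ j))}
     \<longleftrightarrow>
     (\<forall>\<phi>. ring_hom_on (inv_polys G) \<phi> \<longrightarrow>
        ((\<exists>\<psi>. ring_hom_on polys \<psi> \<and> (\<forall>f\<in>inv_polys G. \<psi> f = \<phi> f))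
         \<longleftrightarrow> (\<forall>f\<in>inv_polys G. \<phi> (dpair f f) \<ge> 0)))"
proof -
  have HE: "inv_polys G = alg_gen (range \<pi>)" using assms(2) by (simp add: fundamental_invariants_def)
  have sub: "alg_gen (range \<pi>) \<subseteq> polys" using HE by (auto simp: inv_polys_def)
  have dp: "dpair f g \<in> alg_gen (range \<pi>)" if "f \<in> alg_gen (range \<pi>)" "g \<in> alg_gen (range \<pi>)" for f g
    using dpair_inv[OF assms(1), of f g] that HE by simp
  have pi: "\<pi> i \<in> alg_gen (range \<pi>)" for i by (simp add: alg_gen.gen)
  have M: "(\<chi> i j. phi_z \<pi> z (M_Pi \<pi> $ i $ j)) = (\<chi> i j. phi_z \<pi> z (dpair (\<pi> i) (\<pi> j)))" for z
    by (simp add: M_Pi_def)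
  define V where "V = real_zero_set (relation_ideal \<pi>)"
  define S where "S = {z \<in> V. psd (\<chi> i j. phi_z \<pi> z (dpair (\<pi> i) (\<pi> j)))}"
  define Ext where "Ext = (\<lambda>\<phi>. \<exists>\<psi>. ring_hom_on polys \<psi> \<and> (\<forall>f\<in>alg_gen (range \<pi>). \<psi> f = \<phi> f))"
  define NN where "NN = (\<lambda>\<phi>. \<forall>f\<in>alg_gen (range \<pi>). \<phi> (dpair f f) \<ge> (0::real))"
  have rV: "range (hilbert_map \<pi>) \<subseteq> V"
    by (auto simp: V_def real_zero_set_def relation_ideal_def)
  have key: "(Ext \<phi> \<longleftrightarrow> (\<chi> i. \<phi> (\<pi> i)) \<in> range (hilbert_map \<pi>))
      \<and> (NN \<phi> \<longleftrightarrow> psd (\<chi> i j. phi_z \<pi> (\<chi> i. \<phi> (\<pi> i)) (dpair (\<pi> i) (\<pi> j))))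
      \<and> (\<chi> i. \<phi> (\<pi> i)) \<in> V"
    if hom: "ring_hom_on (alg_gen (range \<pi>)) \<phi>" for \<phi>
  proof (intro conjI)
    show "Ext \<phi> \<longleftrightarrow> (\<chi> i. \<phi> (\<pi> i)) \<in> range (hilbert_map \<pi>)"
      unfolding Ext_def by (rule hom_extend[OF hom sub])
    have "(\<chi> i j. phi_z \<pi> (\<chi> i. \<phi> (\<pi> i)) (dpair (\<pi> i) (\<pi> j))) = (\<chi> i j. \<phi> (dpair (\<pi> i) (\<pi> j)))"
      using hom_phi_z[OF hom dp[OF pi pi]] by simp
    then show "NN \<phi> \<longleftrightarrow> psd (\<chi> i j. phi_z \<pi> (\<chi> i. \<phi> (\<pi> i)) (dpair (\<pi> i) (\<pi> j)))"
      unfolding NN_def using nonneg_psd[OF hom sub dp] by simp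
    show "(\<chi> i. \<phi> (\<pi> i)) \<in> V" unfolding V_def by (rule hom_zero_set[OF hom])
  qed
  have zpt: "(\<chi> i. phi_z \<pi> z (\<pi> i)) = z" if "z \<in> V" for z
    using phi_z_hom(2)[of z \<pi>] that by (simp add: V_def vec_eq_iff)
  have "range (hilbert_map \<pi>) = S \<longleftrightarrow>
     (\<forall>\<phi>. ring_hom_on (alg_gen (range \<pi>)) \<phi> \<longrightarrow> (Ext \<phi> \<longleftrightarrow> NN \<phi>))"
  proof
    assume eq: "range (hilbert_map \<pi>) = S"
    show "\<forall>\<phi>. ring_hom_on (alg_gen (range \<pi>)) \<phi> \<longrightarrow> (Ext \<phi> \<longleftrightarrow> NN \<phi>)"
    proof (intro allI impI)
      fix \<phi> assume hom: "ring_hom_on (alg_gen (range \<pi>)) \<phi>"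
      note k = key[OF hom]
      show "Ext \<phi> \<longleftrightarrow> NN \<phi>" using k eq unfolding S_def by blast
    qed
  next
    assume ii: "\<forall>\<phi>. ring_hom_on (alg_gen (range \<pi>)) \<phi> \<longrightarrow> (Ext \<phi> \<longleftrightarrow> NN \<phi>)"
    have "z \<in> range (hilbert_map \<pi>) \<longleftrightarrow> z \<in> S" if zV: "z \<in> V" for z
    proof -
      have hom: "ring_hom_on (alg_gen (range \<pi>)) (phi_z \<pi> z)"
        using phi_z_hom(1)[of z \<pi>] zV by (simp add: V_def)
      note k = key[OF hom]
      show ?thesis using k ii hom zV zpt[OF zV] unfolding S_def by auto
    qed
    then show "range (hilbert_map \<pi>) = S" using rV unfolding S_def by blast
  qed
  then show ?thesis unfolding M S_def V_def Ext_def NN_def HE by simp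
qed

end
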